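(* Let $X$ be an extremally disconnected topological space satisfying $S_1(s\mathcal{O},s\mathcal{O})$. Let $\mathcal{V}_1,\mathcal{V}_2,\dots$ be nonempty finite families of semi-open subsets of $X$ such that for each $x\in X$ we have $x\in\bigcup\mathcal{V}_n$ for infinitely many $n$. Then there are $U_1\in\mathcal{V}_1, U_2\in\mathcal{V}_2,\dots$ such that $\{U_1,U_2,\dots\}$ covers $X$.
   Context: A subset $A$ of a topological space $X$ is semi-open if $A\subseteq \mathrm{Cl}(\mathrm{Int}(A))$; a semi-open cover is a cover by semi-open sets. A space is extremally disconnected if the closure of every open set is open. $X$ satisfies $S_1(s\mathcal{O},s\mathcal{O})$ (is semi-Rothberger) if for each sequence $\langle\mathcal{U}_n:n\in\omega\rangle$ of semi-open covers of $X$ there are $U_n\in\mathcal{U}_n$ ($n\in\omega$) with $\{U_n:n\in\omega\}$ a cover of $X$. *)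

theory Defs
  imports "HOL-Analysis.Analysis"
begin

definition semi_open :: "'a topology \<Rightarrow> 'a set \<Rightarrow> bool" where
  "semi_open X A \<longleftrightarrow> A \<subseteq> topspace X \<and> A \<subseteq> X closure_of (X interior_of A)"

definition semi_open_cover :: "'a topology \<Rightarrow> 'a set set \<Rightarrow> bool" where
  "semi_open_cover X \<U> \<longleftrightarrow> (\<forall>U\<in>\<U>. semi_open X U) \<and> topspace X \<subseteq> \<Union>\<U>"

definition extremally_disconnected :: "'a topology \<Rightarrow> bool" where
  "extremally_disconnected X \<longleftrightarrow> (\<forall>U. openin X U \<longrightarrow> openin X (X closure_of U))"

definition semi_Rothberger :: "'a topology \<Rightarrow> bool" where
  "semi_Rothberger X \<longleftrightarrow>
     (\<forall>\<U> :: nat \<Rightarrow> 'a set set. (\<forall>n. semi_open_cover X (\<U> n)) \<longrightarrow>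
        (\<exists>U. (\<forall>n. U n \<in> \<U> n) \<and> topspace X \<subseteq> (\<Union>n. U n)))"

end

theory Submission
  imports Defs
begin

lemma ed_closure_Int:
  assumes ed: "extremally_disconnected X" and U: "openin X U" and V: "openin X V"
  shows "X closure_of U \<inter> X closure_of V \<subseteq> X closure_of (U \<inter> V)"
proof -
  have o: "openin X (X closure_of U)" using ed U unfolding extremally_disconnected_def by blast
  have "X closure_of U \<inter> X closure_of V \<subseteq> X closure_of (X closure_of U \<inter> V)"
    by (rule openin_Int_closure_of_subset[OF o])
  also have "\<dots> = X closure_of (V \<inter> X closure_of U)" by (simp add: Int_commute)
  also have "\<dots> = X closure_of (V \<inter> U)" by (rule closure_of_openin_Int_closure_of[OF V])
  finally show ?thesis by (simp add: Int_commute)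
qed

lemma semi_open_Int:
  assumes ed: "extremally_disconnected X" and A: "semi_open X A" and B: "semi_open X B"
  shows "semi_open X (A \<inter> B)"
proof -
  have "A \<inter> B \<subseteq> X closure_of (X interior_of A) \<inter> X closure_of (X interior_of B)"
    using A B unfolding semi_open_def by blast
  also have "\<dots> \<subseteq> X closure_of (X interior_of A \<inter> X interior_of B)"
    by (rule ed_closure_Int[OF ed]) auto
  also have "\<dots> = X closure_of (X interior_of (A \<inter> B))" by (simp add: interior_of_Int)
  finally show ?thesis using A unfolding semi_open_def by blast
qed

lemma semi_open_Inter:
  assumes ed: "extremally_disconnected X" and "finite F" "F \<noteq> {}"
    and "\<And>A. A \<in> F \<Longrightarrow> semi_open X A"
  shows "semi_open X (\<Inter>F)"
  using assms(2,3,4)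
proof (induction F rule: finite_ne_induct)
  case (singleton x) then show ?case by simp
next
  case (insert x F)
  then show ?case using semi_open_Int[OF ed] by simp
qed

primrec picks :: "(nat \<Rightarrow> nat set) \<Rightarrow> nat \<Rightarrow> nat list" where
  "picks F 0 = []"
| "picks F (Suc k) = picks F k @ [SOME n. n \<in> F k - set (picks F k)]"

lemma picks_props:
  assumes "\<And>k. finite (F k) \<and> card (F k) = Suc k"
  shows "length (picks F k) = k \<and> distinct (picks F k) \<and> (\<forall>i<k. picks F k ! i \<in> F i)"
proof (induction k)
  case 0 then show ?case by simp
next
  case (Suc k)
  have "card (set (picks F k)) \<le> k" using Suc card_length by metis
  then have "\<not> F k \<subseteq> set (picks F k)"
    using assms[of k] by (metis card_mono finite_set not_less_eq_eq)
  then have ex: "\<exists>n. n \<in> F k - set (picks F k)" by blast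
  have s: "(SOME n. n \<in> F k - set (picks F k)) \<in> F k - set (picks F k)"
    by (rule someI_ex[OF ex])
  show ?case using Suc s
    by (auto simp: nth_append less_Suc_eq)
qed

lemma picks_stable:
  "i < k \<Longrightarrow> picks F k ! i = picks F (Suc i) ! i"
proof (induction k)
  case 0 then show ?case by simp
next
  case (Suc k)
  have len: "length (picks F k) = k" by (induction k) auto
  show ?case
  proof (cases "i = k")
    case True then show ?thesis by simp
  next
    case False
    then have "i < k" using Suc by simp
    then show ?thesis using Suc len by (simp add: nth_append)
  qed
qed

theorem lemma6:
  fixes X :: "'a topology" and \<V> :: "nat \<Rightarrow> 'a set set"
  assumes "extremally_disconnected X"
    and "semi_Rothberger X"
    and "\<And>n. finite (\<V> n)"
    and "\<And>n. \<V> n \<noteq> {}"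
    and "\<And>n V. V \<in> \<V> n \<Longrightarrow> semi_open X V"
    and "\<And>x. x \<in> topspace X \<Longrightarrow> infinite {n. x \<in> \<Union>(\<V> n)}"
  shows "\<exists>U. (\<forall>n. U n \<in> \<V> n) \<and> topspace X \<subseteq> (\<Union>n. U n)"
proof -
  define \<U> where "\<U> k = {\<Inter>(c ` F) | F c. finite F \<and> card F = Suc k \<and> (\<forall>n\<in>F. c n \<in> \<V> n)}"
    for k :: nat
  have cov: "semi_open_cover X (\<U> k)" for k
    unfolding semi_open_cover_def
  proof safe
    fix W assume "W \<in> \<U> k"
    then obtain F c where W: "W = \<Inter>(c ` F)" "finite F" "card F = Suc k" "\<forall>n\<in>F. c n \<in> \<V> n"
      unfolding \<U>_def by blast
    have "F \<noteq> {}" using W by auto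
    then show "semi_open X W" unfolding W(1)
      by (intro semi_open_Inter[OF assms(1)]) (use W assms(5) in auto)
  next
    fix x assume x: "x \<in> topspace X"
    obtain F where F: "F \<subseteq> {n. x \<in> \<Union>(\<V> n)}" "finite F" "card F = Suc k"
      using infinite_arbitrarily_large[OF assms(6)[OF x]] by blast
    define c where "c n = (SOME V. V \<in> \<V> n \<and> x \<in> V)" for n
    have c: "c n \<in> \<V> n \<and> x \<in> c n" if "n \<in> F" for n
      unfolding c_def by (rule someI_ex) (use F that in auto)
    have "\<Inter>(c ` F) \<in> \<U> k" unfolding \<U>_def using F c by blast
    moreover have "x \<in> \<Inter>(c ` F)" using c by auto
    ultimately show "x \<in> \<Union>(\<U> k)" by blast
  qed
  obtain W where W: "\<And>k. W k \<in> \<U> k" "topspace X \<subseteq> (\<Union>k. W k)"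
    using assms(2) cov unfolding semi_Rothberger_def by blast
  have "\<forall>k. \<exists>F c. W k = \<Inter>(c ` F) \<and> finite F \<and> card F = Suc k \<and> (\<forall>n\<in>F. c n \<in> \<V> n)"
    using W(1) unfolding \<U>_def by blast
  then obtain F C where FC: "\<And>k. W k = \<Inter>(C k ` F k)" "\<And>k. finite (F k)"
    "\<And>k. card (F k) = Suc k" "\<And>k n. n \<in> F k \<Longrightarrow> C k n \<in> \<V> n"
    by metis
  define nk where "nk i = picks F (Suc i) ! i" for i
  have P: "length (picks F k) = k \<and> distinct (picks F k) \<and> (\<forall>i<k. picks F k ! i \<in> F i)" for k
    by (rule picks_props) (use FC in auto)
  have nkF: "nk i \<in> F i" for i using P[of "Suc i"] unfolding nk_def by auto
  have inj: "inj nk"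
  proof (rule injI)
    fix i j assume eq: "nk i = nk j"
    let ?m = "Suc (max i j)"
    have "nk i = picks F ?m ! i" "nk j = picks F ?m ! j"
      unfolding nk_def using picks_stable[of i ?m F] picks_stable[of j ?m F] by simp_all
    then show "i = j" using P[of ?m] eq by (simp add: nth_eq_iff_index_eq)
  qed
  define U where "U n = (if n \<in> range nk then C (inv nk n) n else (SOME V. V \<in> \<V> n))" for n
  have "U n \<in> \<V> n" for n
  proof (cases "n \<in> range nk")
    case True
    then obtain i where "n = nk i" by blast
    then show ?thesis unfolding U_def using inj nkF FC(4) by simp
  next
    case False
    then show ?thesis unfolding U_def using assms(4)[of n] by (simp add: some_in_eq)
  qed
  moreover have "topspace X \<subseteq> (\<Union>n. U n)"
  proof
    fix x assume "x \<in> topspace X"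
    then obtain k where "x \<in> W k" using W(2) by blast
    then have "x \<in> C k (nk k)" using FC(1) nkF by auto
    moreover have "U (nk k) = C k (nk k)" unfolding U_def using inj by simp
    ultimately show "x \<in> (\<Union>n. U n)" by auto
  qed
  ultimately show ?thesis by blast
qed

end
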